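(* Let $l\ge1$, let $G$ be an $l$-step nilpotent group and let $S$ be a symmetric subset of $G$. Then for every $h\in G$ and every $g$ in the subgroup $\langle S\rangle$ generated by $S$, the commutator $[g,h]$ can be written as a product of iterated commutators $[x_1,\dots,x_i]$ with $i\le l$, where $x_j\in S\cup\{h,h^{-1}\}$ for each $j=1,\dots,i$, and in each such iterated commutator at least one $x_j$ lies in $\{h,h^{-1}\}$.
   Context: For group elements, $[y,z]=yzy^{-1}z^{-1}$, and the iterated commutator is $[x_1,\dots,x_i]=[x_1,[x_2,\dots,[x_{i-1},x_i]\dots]]$ for $i\ge2$. The descending central series is $C^0(G)=G$, $C^{j+1}(G)=[G,C^j(G)]$, and $G$ is $l$-step nilpotent if $C^l(G)=\{1\}$ and $C^{l-1}(G)\ne\{1\}$. *)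

theory Defs
  imports "HOL-Algebra.Algebra"
begin

definition comm :: "('a, 'b) monoid_scheme \<Rightarrow> 'a \<Rightarrow> 'a \<Rightarrow> 'a" where
  "comm G y z = y \<otimes>\<^bsub>G\<^esub> z \<otimes>\<^bsub>G\<^esub> inv\<^bsub>G\<^esub> y \<otimes>\<^bsub>G\<^esub> inv\<^bsub>G\<^esub> z"

text \<open>Iterated commutator [x1,...,xi] = [x1,[x2,...,[x(i-1),xi]...]]
  (only used for lists of length at least 2).\<close>
fun iter_comm :: "('a, 'b) monoid_scheme \<Rightarrow> 'a list \<Rightarrow> 'a" where
  "iter_comm G [] = \<one>\<^bsub>G\<^esub>"
| "iter_comm G [x] = x"
| "iter_comm G (x # y # xs) = comm G x (iter_comm G (y # xs))"

fun lower_central :: "('a, 'b) monoid_scheme \<Rightarrow> nat \<Rightarrow> 'a set" where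
  "lower_central G 0 = carrier G"
| "lower_central G (Suc j) =
     generate G {comm G x y | x y. x \<in> carrier G \<and> y \<in> lower_central G j}"

definition nilpotent_step :: "('a, 'b) monoid_scheme \<Rightarrow> nat \<Rightarrow> bool" where
  "nilpotent_step G l \<longleftrightarrow>
     lower_central G l = {\<one>\<^bsub>G\<^esub>} \<and> lower_central G (l - 1) \<noteq> {\<one>\<^bsub>G\<^esub>}"

definition symmetric_subset :: "('a, 'b) monoid_scheme \<Rightarrow> 'a set \<Rightarrow> bool" where
  "symmetric_subset G S \<longleftrightarrow> S \<subseteq> carrier G \<and> (\<forall>s\<in>S. inv\<^bsub>G\<^esub> s \<in> S)"

definition list_prod :: "('a, 'b) monoid_scheme \<Rightarrow> 'a list \<Rightarrow> 'a" where
  "list_prod G xs = foldr (\<lambda>x y. x \<otimes>\<^bsub>G\<^esub> y) xs \<one>\<^bsub>G\<^esub>"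

end

theory Submission
  imports Defs
begin

definition validc :: "('a, 'b) monoid_scheme \<Rightarrow> 'a set \<Rightarrow> 'a \<Rightarrow> 'a list list \<Rightarrow> bool" where
  "validc G S h cs \<longleftrightarrow> (\<forall>xs \<in> set cs. 2 \<le> length xs
                \<and> set xs \<subseteq> S \<union> {h, inv\<^bsub>G\<^esub> h}
                \<and> (\<exists>x \<in> set xs. x \<in> {h, inv\<^bsub>G\<^esub> h}))"

lemma validc_append: "validc G S h (a @ b) \<longleftrightarrow> validc G S h a \<and> validc G S h b"
  by (auto simp: validc_def)

context group begin

lemma comm_closed[simp]: "x \<in> carrier G \<Longrightarrow> y \<in> carrier G \<Longrightarrow> comm G x y \<in> carrier G"
  by (simp add: comm_def)

lemma iter_comm_closed: "set xs \<subseteq> carrier G \<Longrightarrow> iter_comm G xs \<in> carrier G"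
  by (induction xs rule: induct_list012) auto

lemma list_prod_closed: "set xs \<subseteq> carrier G \<Longrightarrow> list_prod G xs \<in> carrier G"
  by (induction xs) (auto simp: list_prod_def)

lemma list_prod_append: "set xs \<subseteq> carrier G \<Longrightarrow> set ys \<subseteq> carrier G \<Longrightarrow>
   list_prod G (xs @ ys) = list_prod G xs \<otimes> list_prod G ys"
  by (induction xs) (auto simp: list_prod_def m_assoc list_prod_closed[unfolded list_prod_def])

lemma comm_conj: "x \<in> carrier G \<Longrightarrow> c \<in> carrier G \<Longrightarrow> comm G x c \<otimes> c = x \<otimes> c \<otimes> inv x"
  by (simp add: comm_def m_assoc)

lemma inv_cancel_l: "x \<in> carrier G \<Longrightarrow> z \<in> carrier G \<Longrightarrow> inv x \<otimes> (x \<otimes> z) = z"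
  by (simp add: m_assoc[symmetric])

lemma inv_cancel_l2: "x \<in> carrier G \<Longrightarrow> z \<in> carrier G \<Longrightarrow> x \<otimes> (inv x \<otimes> z) = z"
  by (simp add: m_assoc[symmetric])

lemma comm_mult: "x \<in> carrier G \<Longrightarrow> y \<in> carrier G \<Longrightarrow> h \<in> carrier G \<Longrightarrow>
   comm G (x \<otimes> y) h = x \<otimes> comm G y h \<otimes> inv x \<otimes> comm G x h"
  by (simp add: comm_def m_assoc inv_mult_group inv_cancel_l inv_cancel_l2)

abbreviation lp where "lp cs \<equiv> list_prod G (map (iter_comm G) cs)"

lemma validc_carrier:
  assumes "S \<subseteq> carrier G" "h \<in> carrier G" "validc G S h cs"
  shows "set (map (iter_comm G) cs) \<subseteq> carrier G"
  using assms by (auto simp: validc_def intro!: iter_comm_closed)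

lemma conj_step:
  assumes S: "S \<subseteq> carrier G" and h: "h \<in> carrier G" and x: "x \<in> S"
  shows "validc G S h cs \<Longrightarrow> \<exists>cs'. validc G S h cs' \<and> lp cs' = x \<otimes> lp cs \<otimes> inv x"
proof (induction cs)
  case Nil
  have "x \<in> carrier G" using x S by auto
  then show ?case by (intro exI[of _ "[]"]) (simp add: validc_def list_prod_def)
next
  case (Cons xs cs)
  have xc: "x \<in> carrier G" using x S by auto
  from Cons.prems have v: "validc G S h cs" by (simp add: validc_def)
  from Cons.IH[OF v] obtain cs' where cs': "validc G S h cs'" "lp cs' = x \<otimes> lp cs \<otimes> inv x" by blast
  from Cons.prems have vx: "2 \<le> length xs" "set xs \<subseteq> S \<union> {h, inv h}"
     "\<exists>y \<in> set xs. y \<in> {h, inv h}" by (auto simp: validc_def)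
  then obtain y ys where xs: "xs = y # ys" "ys \<noteq> []" by (cases xs; cases "tl xs") auto
  have xsc: "set xs \<subseteq> carrier G" using vx S h by auto
  have c: "iter_comm G xs \<in> carrier G" using xsc by (rule iter_comm_closed)
  have lpc: "lp cs \<in> carrier G" using v S h by (intro list_prod_closed validc_carrier)
  have ic: "iter_comm G (x # xs) = comm G x (iter_comm G xs)"
    using xs by (cases ys) auto
  let ?n = "[x # xs, xs] @ cs'"
  have "validc G S h ?n" using cs'(1) Cons.prems x vx by (auto simp: validc_def)
  moreover have "lp ?n = x \<otimes> lp (xs # cs) \<otimes> inv x"
  proof -
    have "lp ?n = comm G x (iter_comm G xs) \<otimes> (iter_comm G xs \<otimes> lp cs')"
      by (simp add: list_prod_def ic)
    also have "\<dots> = (x \<otimes> iter_comm G xs \<otimes> inv x) \<otimes> (x \<otimes> lp cs \<otimes> inv x)"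
    proof -
      have l': "lp cs' \<in> carrier G" using cs'(2) xc lpc by simp
      have "comm G x (iter_comm G xs) \<otimes> (iter_comm G xs \<otimes> lp cs')
            = (comm G x (iter_comm G xs) \<otimes> iter_comm G xs) \<otimes> lp cs'"
        using xc c l' by (simp add: m_assoc)
      then show ?thesis using comm_conj[OF xc c] cs'(2) by simp
    qed
    also have "\<dots> = x \<otimes> (iter_comm G xs \<otimes> lp cs) \<otimes> inv x"
      using xc c lpc by (simp add: m_assoc inv_cancel_l)
    also have "\<dots> = x \<otimes> lp (xs # cs) \<otimes> inv x" by (simp add: list_prod_def)
    finally show ?thesis .
  qed
  ultimately show ?case by (intro exI[of _ ?n] conjI)
qed

lemma conj_gen:
  assumes S: "symmetric_subset G S" and h: "h \<in> carrier G"
  shows "g \<in> generate G S \<Longrightarrow> \<forall>cs. validc G S h cs \<longrightarrow>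
     (\<exists>cs'. validc G S h cs' \<and> lp cs' = g \<otimes> lp cs \<otimes> inv g)"
proof (induction rule: generate.induct)
  case one
  have "\<And>cs. validc G S h cs \<Longrightarrow> lp cs \<in> carrier G"
    using S h by (intro list_prod_closed validc_carrier) (auto simp: symmetric_subset_def)
  then show ?case by auto
next
  case (incl x)
  then show ?case using conj_step S h by (auto simp: symmetric_subset_def)
next
  case (inv x)
  then show ?case using conj_step[of S h "inv x"] S h by (auto simp: symmetric_subset_def)
next
  case (eng g1 g2)
  have Sc: "S \<subseteq> carrier G" using S by (simp add: symmetric_subset_def)
  have g: "g1 \<in> carrier G" "g2 \<in> carrier G" using eng.hyps generate_incl[OF Sc] by auto
  show ?case
  proof (intro allI impI)
    fix cs assume v: "validc G S h cs"
    obtain c1 where c1: "validc G S h c1" "lp c1 = g2 \<otimes> lp cs \<otimes> inv g2" using eng.IH(2) v by blast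
    obtain c2 where c2: "validc G S h c2" "lp c2 = g1 \<otimes> lp c1 \<otimes> inv g1" using eng.IH(1) c1(1) by blast
    have lpc: "lp cs \<in> carrier G" using v Sc h by (intro list_prod_closed validc_carrier)
    have "lp c2 = g1 \<otimes> g2 \<otimes> lp cs \<otimes> inv (g1 \<otimes> g2)"
      using c2(2) c1(2) g lpc by (simp add: m_assoc inv_mult_group)
    then show "\<exists>cs'. validc G S h cs' \<and> lp cs' = g1 \<otimes> g2 \<otimes> lp cs \<otimes> inv (g1 \<otimes> g2)"
      using c2(1) by blast
  qed
qed

lemma comm_gen:
  assumes S: "symmetric_subset G S" and h: "h \<in> carrier G"
  shows "g \<in> generate G S \<Longrightarrow> \<exists>cs. validc G S h cs \<and> lp cs = comm G g h"
proof (induction rule: generate.induct)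
  case one
  then show ?case using h by (intro exI[of _ "[]"]) (simp add: validc_def list_prod_def comm_def)
next
  case (incl x)
  have xc: "x \<in> S" using incl S by (simp add: symmetric_subset_def)
  then have "x \<in> carrier G" using S by (auto simp: symmetric_subset_def)
  then have "lp [[x, h]] = comm G (x) h" using h by (simp add: list_prod_def)
  moreover have "validc G S h [[x, h]]" using xc by (simp add: validc_def)
  ultimately show ?case by blast
next
  case (inv x)
  have xc: "inv x \<in> S" using inv S by (simp add: symmetric_subset_def)
  then have "inv x \<in> carrier G" using S by (auto simp: symmetric_subset_def)
  then have "lp [[inv x, h]] = comm G (inv x) h" using h by (simp add: list_prod_def)
  moreover have "validc G S h [[inv x, h]]" using xc by (simp add: validc_def)
  ultimately show ?case by blast
next
  case (eng g1 g2)
  have Sc: "S \<subseteq> carrier G" using S by (simp add: symmetric_subset_def)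
  have g: "g1 \<in> carrier G" "g2 \<in> carrier G" using eng.hyps generate_incl[OF Sc] by blast+
  obtain c1 where c1: "validc G S h c1" "lp c1 = comm G g1 h" using eng.IH(1) by blast
  obtain c2 where c2: "validc G S h c2" "lp c2 = comm G g2 h" using eng.IH(2) by blast
  obtain c3 where c3: "validc G S h c3" "lp c3 = g1 \<otimes> lp c2 \<otimes> inv g1"
    using conj_gen[OF S h eng.hyps(1)] c2(1) by blast
  have "lp (c3 @ c1) = lp c3 \<otimes> lp c1"
    using list_prod_append[OF validc_carrier[OF Sc h c3(1)] validc_carrier[OF Sc h c1(1)]] by simp
  also have "\<dots> = comm G (g1 \<otimes> g2) h" unfolding c3(2) c2(2) c1(2) comm_mult[OF g h] ..
  finally have e: "lp (c3 @ c1) = comm G (g1 \<otimes> g2) h" .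
  have "validc G S h (c3 @ c1)" using c3(1) c1(1) by (simp add: validc_append)
  with e show ?case by (intro exI[of _ "c3 @ c1"] conjI)
qed

lemma iter_comm_lc: "set xs \<subseteq> carrier G \<Longrightarrow> xs \<noteq> [] \<Longrightarrow> iter_comm G xs \<in> lower_central G (length xs - 1)"
proof (induction xs rule: induct_list012)
  case (3 x y zs)
  then have "comm G x (iter_comm G (y # zs)) \<in> lower_central G (Suc (length (y#zs) - 1))"
    by (auto intro!: generate.incl)
  then show ?case by simp
qed auto

lemma iter_comm_long:
  assumes "lower_central G l = {\<one>}" "l \<ge> 1"
  shows "set xs \<subseteq> carrier G \<Longrightarrow> length xs \<ge> Suc l \<Longrightarrow> iter_comm G xs = \<one>"
proof (induction xs)
  case Nil then show ?case by simp
next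
  case (Cons x ys)
  show ?case
  proof (cases "length (x # ys) = Suc l")
    case True
    then show ?thesis using iter_comm_lc[OF Cons.prems(1)] assms by auto
  next
    case False
    then have "length ys \<ge> Suc l" using Cons.prems by simp
    then have e: "iter_comm G ys = \<one>" using Cons by auto
    obtain y zs where "ys = y # zs" using \<open>length ys \<ge> Suc l\<close> by (cases ys) auto
    then show ?thesis using e Cons.prems by (simp add: comm_def)
  qed
qed

lemma lp_filter:
  assumes "\<And>c. c \<in> set cs \<Longrightarrow> \<not> P c \<Longrightarrow> iter_comm G c = \<one>"
    and "set (map (iter_comm G) cs) \<subseteq> carrier G"
  shows "lp (filter P cs) = lp cs"
  using assms
proof (induction cs)
  case (Cons c cs)
  have "list_prod G (map (iter_comm G) cs) \<in> carrier G"
    using Cons.prems by (intro list_prod_closed) auto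
  then show ?case using Cons by (auto simp: list_prod_def)
qed simp

end

theorem lemma2p5p2:
  fixes G :: "('a, 'b) monoid_scheme" and l :: nat and S :: "'a set" and g h :: 'a
  assumes "group G"
    and "l \<ge> 1"
    and "nilpotent_step G l"
    and "symmetric_subset G S"
    and "h \<in> carrier G"
    and "g \<in> generate G S"
  shows "\<exists>cs :: 'a list list.
           (\<forall>xs \<in> set cs. 2 \<le> length xs \<and> length xs \<le> l
                \<and> set xs \<subseteq> S \<union> {h, inv\<^bsub>G\<^esub> h}
                \<and> (\<exists>x \<in> set xs. x \<in> {h, inv\<^bsub>G\<^esub> h}))
         \<and> comm G g h = list_prod G (map (iter_comm G) cs)"
proof -
  interpret group G by fact
  have Sc: "S \<subseteq> carrier G" using assms(4) by (simp add: symmetric_subset_def)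
  obtain cs where cs: "validc G S h cs" "list_prod G (map (iter_comm G) cs) = comm G g h"
    using comm_gen[OF assms(4,5,6)] by blast
  have lc: "lower_central G l = {\<one>\<^bsub>G\<^esub>}" using assms(3) by (simp add: nilpotent_step_def)
  have car: "\<And>c. c \<in> set cs \<Longrightarrow> set c \<subseteq> carrier G" using cs(1) Sc assms(5)
    by (auto simp: validc_def)
  have "list_prod G (map (iter_comm G) (filter (\<lambda>c. length c \<le> l) cs)) = list_prod G (map (iter_comm G) cs)"
  proof (rule lp_filter)
    fix c assume "c \<in> set cs" "\<not> length c \<le> l"
    then show "iter_comm G c = \<one>\<^bsub>G\<^esub>"
      using iter_comm_long[OF lc assms(2) car] by simp
  next
    show "set (map (iter_comm G) cs) \<subseteq> carrier G" by (rule validc_carrier[OF Sc assms(5) cs(1)])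
  qed
  moreover have "validc G S h (filter (\<lambda>c. length c \<le> l) cs)"
    using cs(1) unfolding validc_def by simp
  ultimately show ?thesis using cs(2) unfolding validc_def
    by (intro exI[of _ "filter (\<lambda>c. length c \<le> l) cs"]) simp
qed

end
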